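(* Let $\Gamma$ be a weighted digraph with vertex set $\{1,\dots,n\}$, $n>1$, without loops and with strictly positive arc weights, with Laplacian matrix $L$, in-forest dimension $d$, and let $\tilde J=\sigma_{n-d}^{-1}Q_{n-d}$. Let $\alpha\in\mathbb C$. Then (i) the eigenvalues of $L+\alpha\tilde J$, listed with multiplicities, are the nonzero eigenvalues of $L$ with their multiplicities together with $\alpha$ taken $d$ times (i.e., they are obtained from the eigenvalues $\lambda_1,\dots,\lambda_n$ of $L$ by replacing each $\lambda_i=0$ with $\alpha$); (ii) $L+\alpha\tilde J$ is nonsingular whenever $\alpha\neq0$.
   Context: $W=(w_{ij})$ is the matrix of arc weights ($w_{ij}>0$ iff there is an arc $i\to j$, else $0$). The Laplacian $L=(\ell_{ij})$: $\ell_{ij}=-w_{ij}$ for $j\ne i$, $\ell_{ii}=\sum_{k\ne i}w_{ik}$. The weight of a subgraph is the product of its arc weights (1 if no arcs); the weight of a set of subgraphs is the sum of their weights. A converging tree is a weakly connected digraph with one vertex (the root) of outdegree 0 and all others of outdegree 1; an in-forest is a spanning subgraph of $\Gamma$ whose weak components are converging trees. The in-forest dimension $d$ is the minimal number of trees in an in-forest (so in-forests have at most $n-d$ arcs). $\sigma_k$ is the total weight of in-forests with $k$ arcs; $Q_k=(q^k_{ij})$ with $q^k_{ij}$ the total weight of in-forests with $k$ arcs in which $i$ lies in a tree rooted at $j$. *)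

theory Defs
  imports "Jordan_Normal_Form.Char_Poly"
begin

text \<open>Vertices are 0..<n (the paper's 1..n shifted by one). W is an n x n real
 matrix of arc weights: there is an arc i -> j iff W(i,j) > 0.\<close>

definition arcs :: "real mat \<Rightarrow> nat \<Rightarrow> (nat \<times> nat) set" where
  "arcs W n = {(i,j). i < n \<and> j < n \<and> i \<noteq> j \<and> W $$ (i,j) > 0}"

definition outdeg :: "(nat \<times> nat) set \<Rightarrow> nat \<Rightarrow> nat" where
  "outdeg F i = card {j. (i,j) \<in> F}"

definition weak_comp :: "(nat \<times> nat) set \<Rightarrow> nat \<Rightarrow> nat \<Rightarrow> nat set" where
  "weak_comp F n i = {j. j < n \<and> (i,j) \<in> (F \<union> F\<inverse>)\<^sup>*}"

definition is_in_forest :: "real mat \<Rightarrow> nat \<Rightarrow> (nat \<times> nat) set \<Rightarrow> bool" where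
  "is_in_forest W n F \<longleftrightarrow> F \<subseteq> arcs W n \<and>
     (\<forall>i<n. outdeg F i \<le> 1) \<and>
     (\<forall>i<n. \<exists>!r. r \<in> weak_comp F n i \<and> outdeg F r = 0)"

definition num_trees :: "(nat \<times> nat) set \<Rightarrow> nat \<Rightarrow> nat" where
  "num_trees F n = card (weak_comp F n ` {..<n})"

definition in_forest_dim :: "real mat \<Rightarrow> nat \<Rightarrow> nat" where
  "in_forest_dim W n = Min {num_trees F n | F. is_in_forest W n F}"

definition fweight :: "real mat \<Rightarrow> (nat \<times> nat) set \<Rightarrow> real" where
  "fweight W F = (\<Prod>(i,j)\<in>F. W $$ (i,j))"

definition sigma :: "real mat \<Rightarrow> nat \<Rightarrow> nat \<Rightarrow> real" where
  "sigma W n k = (\<Sum>F\<in>{F. is_in_forest W n F \<and> card F = k}. fweight W F)"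

definition Qmat :: "real mat \<Rightarrow> nat \<Rightarrow> nat \<Rightarrow> real mat" where
  "Qmat W n k = mat n n (\<lambda>(i,j). \<Sum>F\<in>{F. is_in_forest W n F \<and> card F = k
        \<and> j \<in> weak_comp F n i \<and> outdeg F j = 0}. fweight W F)"

definition laplacian :: "real mat \<Rightarrow> nat \<Rightarrow> real mat" where
  "laplacian W n = mat n n (\<lambda>(i,j). if i = j then (\<Sum>k\<in>{..<n} - {i}. W $$ (i,k))
        else - W $$ (i,j))"

definition Jtilde :: "real mat \<Rightarrow> nat \<Rightarrow> real mat" where
  "Jtilde W n = (let d = in_forest_dim W n in
     (1 / sigma W n (n - d)) \<cdot>\<^sub>m Qmat W n (n - d))"

abbreviation cmat :: "real mat \<Rightarrow> complex mat" where
  "cmat A \<equiv> map_mat complex_of_real A"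

end

theory Submission
  imports Defs "Jordan_Normal_Form.Schur_Decomposition"
begin

definition mtr :: "'a::comm_ring_1 mat \<Rightarrow> 'a" where
  "mtr A = (\<Sum>i<dim_row A. A $$ (i,i))"
lemma mtr_comm:
  assumes A: "A \<in> carrier_mat n m" and B: "B \<in> carrier_mat m n"
  shows "mtr (A * B) = mtr (B * A)"
proof -
  have "mtr (A * B) = (\<Sum>i<n. \<Sum>k<m. A $$ (i,k) * B $$ (k,i))"
    using A B unfolding mtr_def by (simp add: scalar_prod_def lessThan_atLeast0)
  also have "\<dots> = (\<Sum>k<m. \<Sum>i<n. B $$ (k,i) * A $$ (i,k))"
    by (subst sum.swap) (simp add: mult.commute)
  also have "\<dots> = mtr (B * A)"
    using A B unfolding mtr_def by (simp add: scalar_prod_def lessThan_atLeast0)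
  finally show ?thesis .
qed
lemma mtr_similar:
  assumes "similar_mat_wit A B P Q"
  shows "mtr A = mtr B"
proof -
  obtain n where n: "n = dim_row A" by simp
  from assms have c: "A \<in> carrier_mat n n" "B \<in> carrier_mat n n" "P \<in> carrier_mat n n" "Q \<in> carrier_mat n n"
    and QP: "Q * P = 1\<^sub>m n" and AE: "A = P * B * Q" unfolding similar_mat_wit_def Let_def insert_subset n by blast+
  have BQ: "B * Q \<in> carrier_mat n n" using c by (metis mult_carrier_mat)
  have "A = P * (B * Q)" using AE assoc_mult_mat[OF c(3) c(2) c(4)] by (rule trans)
  hence "mtr A = mtr (P * (B * Q))" by (rule arg_cong)
  also have "\<dots> = mtr ((B * Q) * P)" by (rule mtr_comm[OF c(3) BQ])
  also have "(B * Q) * P = B * (Q * P)" by (rule assoc_mult_mat[OF c(2) c(4) c(3)])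
  also have "\<dots> = B" unfolding QP by (rule right_mult_one_mat[OF c(2)])
  finally show ?thesis .
qed

lemma mtr_ut: "mtr B = sum_list (diag_mat B)"
  unfolding mtr_def diag_mat_def by (simp add: sum_list_sum_nth atLeast0LessThan)

lemma eig_idem:
  fixes A :: "'a::field mat"
  assumes A: "A \<in> carrier_mat n n" and AA: "A * A = c \<cdot>\<^sub>m A" and e: "eigenvalue A e"
  shows "e = 0 \<or> e = c"
proof -
  from e obtain v where v: "v \<in> carrier_vec n" "v \<noteq> 0\<^sub>v n" "A *\<^sub>v v = e \<cdot>\<^sub>v v"
    unfolding eigenvalue_def eigenvector_def using A by auto
  have "(A * A) *\<^sub>v v = A *\<^sub>v (A *\<^sub>v v)" by (rule assoc_mult_mat_vec[OF A A v(1)])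
  also have "\<dots> = A *\<^sub>v (e \<cdot>\<^sub>v v)" using v(3) by simp
  also have "\<dots> = e \<cdot>\<^sub>v (A *\<^sub>v v)" by (rule mult_mat_vec[OF A v(1)])
  also have "\<dots> = e \<cdot>\<^sub>v (e \<cdot>\<^sub>v v)" using v(3) by simp
  also have "\<dots> = (e * e) \<cdot>\<^sub>v v" by (rule smult_smult_assoc)
  finally have 1: "(A * A) *\<^sub>v v = (e * e) \<cdot>\<^sub>v v" .
  have 2: "(A * A) *\<^sub>v v = (c * e) \<cdot>\<^sub>v v"
  proof (rule eq_vecI)
    show "dim_vec ((A * A) *\<^sub>v v) = dim_vec ((c * e) \<cdot>\<^sub>v v)" using A v(1) by simp
    fix i assume "i < dim_vec ((c * e) \<cdot>\<^sub>v v)"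
    hence i: "i < n" using v(1) by simp
    have "((A * A) *\<^sub>v v) $ i = (c \<cdot>\<^sub>m A *\<^sub>v v) $ i" unfolding AA ..
    also have "\<dots> = c * (A *\<^sub>v v) $ i" using A v(1) i
      by (simp add: scalar_prod_def sum_distrib_left mult.assoc)
    also have "\<dots> = ((c * e) \<cdot>\<^sub>v v) $ i" unfolding v(3) using v(1) i by simp
    finally show "((A * A) *\<^sub>v v) $ i = ((c * e) \<cdot>\<^sub>v v) $ i" .
  qed
  from v(2) v(1) obtain i where i: "i < n" "v $ i \<noteq> 0" by (auto simp: vec_eq_iff)
  from 1 2 have "((e * e) \<cdot>\<^sub>v v) $ i = ((c * e) \<cdot>\<^sub>v v) $ i" by simp
  hence "e * e * v $ i = c * e * v $ i" using i v(1) by simp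
  hence "e * e = c * e" using i(2) by simp
  hence "e * (e - c) = 0" by (simp add: algebra_simps)
  thus ?thesis by simp
qed

lemma prod_two_vals:
  assumes "\<forall>e\<in>set es. e = 0 \<or> e = (c::'a::field)"
  shows "(\<Prod>a\<leftarrow>es. [:- a, 1:]) = [:-c,1:] ^ length (filter (\<lambda>e. e = c) es) * [:0,1:] ^ (length es - length (filter (\<lambda>e. e = c) es))
    \<and> sum_list es = c * of_nat (length (filter (\<lambda>e. e = c) es))"
  using assms
proof (induction es)
  case Nil
  then show ?case by simp
next
  case (Cons a es)
  have le: "length (filter (\<lambda>e. e = c) es) \<le> length es" by (rule length_filter_le)
  show ?case
  proof (cases "a = c")
    case True
    then show ?thesis using Cons by (simp add: algebra_simps)
  next
    case False
    hence a: "a = 0" using Cons.prems by auto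
    have "Suc (length es) - length (filter (\<lambda>e. e = c) es) = Suc (length es - length (filter (\<lambda>e. e = c) es))"
      using le by (rule Suc_diff_le)
    then show ?thesis using Cons False a by (simp add: algebra_simps)
  qed
qed

lemma cp_idem:
  fixes A :: "complex mat"
  assumes A: "A \<in> carrier_mat n n" and AA: "A * A = c \<cdot>\<^sub>m A" and tr: "mtr A = c * of_nat t" and t: "t \<le> n"
  shows "char_poly A = [:-c,1:] ^ t * [:0,1:] ^ (n - t)"
proof -
  obtain es where cp: "char_poly A = (\<Prod>a\<leftarrow>es. [:- a, 1:])" and len: "length es = n"
    using char_poly_factorized[OF A] by blast
  have vals: "\<forall>e\<in>set es. e = 0 \<or> e = c"
  proof
    fix e assume e: "e \<in> set es"
    have "[:-e,1:] dvd char_poly A" unfolding cp by (rule prod_list_dvd, use e in auto)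
    hence "poly (char_poly A) e = 0" by (simp add: poly_eq_0_iff_dvd)
    hence "eigenvalue A e" using eigenvalue_root_char_poly[OF A] by simp
    thus "e = 0 \<or> e = c" by (rule eig_idem[OF A AA])
  qed
  define k where "k = length (filter (\<lambda>e. e = c) es)"
  from prod_two_vals[OF vals] have pr: "char_poly A = [:-c,1:] ^ k * [:0,1:] ^ (n - k)"
    and sm: "sum_list es = c * of_nat k" unfolding k_def cp len by auto
  have kn: "k \<le> n" unfolding k_def len[symmetric] by (rule length_filter_le)
  obtain B P Q where S: "schur_decomposition A es = (B,P,Q)" by (cases "schur_decomposition A es") auto
  from schur_decomposition[OF A cp S] have sim: "similar_mat_wit A B P Q" and dg: "diag_mat B = es" by auto
  have "c * of_nat t = c * of_nat k" using mtr_similar[OF sim] mtr_ut[of B] dg tr sm by simp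
  show ?thesis
  proof (cases "c = 0")
    case True
    have "[:-c,1:] ^ t * [:0,1:] ^ (n - t) = [:0,1:] ^ (t + (n - t))" using True by (simp add: power_add)
    also have "\<dots> = [:0,1:] ^ (k + (n - k))" using t kn by simp
    also have "\<dots> = char_poly A" using True pr by (simp add: power_add)
    finally show ?thesis by simp
  next
    case False
    with \<open>c * of_nat t = c * of_nat k\<close> have "t = k" by simp
    thus ?thesis using pr by simp
  qed
qed

lemma const_poly_sum: "(\<Sum>k\<in>S. [:f k:]) = [:\<Sum>k\<in>S. f k:]"
  by (induction S rule: infinite_finite_induct) auto

lemma mult_entry:
  assumes "A \<in> carrier_mat n n" "B \<in> carrier_mat n n" "i < n" "j < n"
  shows "(A * B) $$ (i,j) = (\<Sum>k<n. A $$ (i,k) * B $$ (k,j))"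
  using assms by (simp add: scalar_prod_def lessThan_atLeast0)

lemma cpm_prod:
  fixes A B :: "'a::comm_ring_1 mat"
  assumes A: "A \<in> carrier_mat n n" and B: "B \<in> carrier_mat n n"
  shows "char_poly_matrix A * char_poly_matrix B = mat n n (\<lambda>(i,j). (if i = j then [:0,0,1:] else 0)
     - [:0,1:] * [:(A+B)$$(i,j):] + [:(A*B)$$(i,j):])"
proof (rule eq_matI)
  show "dim_row (char_poly_matrix A * char_poly_matrix B) = dim_row (mat n n (\<lambda>(i,j). (if i = j then [:0,0,1:] else 0)
     - [:0,1:] * [:(A+B)$$(i,j):] + [:(A*B)$$(i,j):]))" using char_poly_matrix_closed[OF A] by simp
  show "dim_col (char_poly_matrix A * char_poly_matrix B) = dim_col (mat n n (\<lambda>(i,j). (if i = j then [:0,0,1:] else 0)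
     - [:0,1:] * [:(A+B)$$(i,j):] + [:(A*B)$$(i,j):]))" using char_poly_matrix_closed[OF B] by simp
  fix i j assume "i < dim_row (mat n n (\<lambda>(i,j). (if i = j then [:0,0,1:] else 0)
     - [:0,1:] * [:(A+B)$$(i,j):] + [:(A*B)$$(i,j):]))" "j < dim_col (mat n n (\<lambda>(i,j). (if i = j then [:0,0,1:] else 0)
     - [:0,1:] * [:(A+B)$$(i,j):] + [:(A*B)$$(i,j):]))"
  hence i: "i < n" and j: "j < n" by auto
  have cA: "char_poly_matrix A \<in> carrier_mat n n" "char_poly_matrix B \<in> carrier_mat n n" using A B by auto
  have eA: "\<And>k. k < n \<Longrightarrow> char_poly_matrix A $$ (i,k) = (if i = k then [:0,1:] else 0) + [:- A $$ (i,k):]"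
    using A i unfolding char_poly_matrix_def by auto
  have eB: "\<And>k. k < n \<Longrightarrow> char_poly_matrix B $$ (k,j) = (if k = j then [:0,1:] else 0) + [:- B $$ (k,j):]"
    using B j unfolding char_poly_matrix_def by auto
  have "(char_poly_matrix A * char_poly_matrix B) $$ (i,j) =
     (\<Sum>k<n. ((if i = k then [:0,1:] else 0) + [:- A $$ (i,k):]) * ((if k = j then [:0,1:] else 0) + [:- B $$ (k,j):]))"
    unfolding mult_entry[OF cA i j] using eA eB by (intro sum.cong) auto
  also have "\<dots> = (\<Sum>k<n. (if k = i then (if i = j then [:0,0,1:] else 0) else 0)
      + (if k = i then [:0,1:] * [:- B $$ (k,j):] else 0)
      + (if k = j then [:0,1:] * [:- A $$ (i,k):] else 0)
      + [:A $$ (i,k) * B $$ (k,j):])"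
    by (intro sum.cong) (auto simp: algebra_simps)
  also have "\<dots> = (if i = j then [:0,0,1:] else 0) + [:0,1:] * [:- B $$ (i,j):] + [:0,1:] * [:- A $$ (i,j):]
      + [:\<Sum>k<n. A $$ (i,k) * B $$ (k,j):]"
    using i j by (simp add: sum.distrib const_poly_sum)
  also have "\<dots> = mat n n (\<lambda>(i,j). (if i = j then [:0,0,1:] else 0)
     - [:0,1:] * [:(A+B)$$(i,j):] + [:(A*B)$$(i,j):]) $$ (i,j)"
    using i j A B by (simp add: mult_entry[OF A B i j] algebra_simps)
  finally show "(char_poly_matrix A * char_poly_matrix B) $$ (i,j) = mat n n (\<lambda>(i,j). (if i = j then [:0,0,1:] else 0)
     - [:0,1:] * [:(A+B)$$(i,j):] + [:(A*B)$$(i,j):]) $$ (i,j)" .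
qed

lemma cp_prod_eq:
  fixes A B C D :: "'a::comm_ring_1 mat"
  assumes c: "A \<in> carrier_mat n n" "B \<in> carrier_mat n n" "C \<in> carrier_mat n n" "D \<in> carrier_mat n n"
    and s: "A + B = C + D" and p: "A * B = C * D"
  shows "char_poly A * char_poly B = char_poly C * char_poly D"
proof -
  have cc: "char_poly_matrix A \<in> carrier_mat n n" "char_poly_matrix B \<in> carrier_mat n n"
     "char_poly_matrix C \<in> carrier_mat n n" "char_poly_matrix D \<in> carrier_mat n n" using c by auto
  have "char_poly A * char_poly B = det (char_poly_matrix A * char_poly_matrix B)"
    unfolding char_poly_def by (rule det_mult[OF cc(1,2), symmetric])
  also have "char_poly_matrix A * char_poly_matrix B = char_poly_matrix C * char_poly_matrix D"
    unfolding cpm_prod[OF c(1,2)] cpm_prod[OF c(3,4)] s p ..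
  also have "det \<dots> = char_poly C * char_poly D"
    unfolding char_poly_def by (rule det_mult[OF cc(3,4)])
  finally show ?thesis .
qed

lemma cp_scalar:
  fixes a :: "'a::comm_ring_1"
  shows "char_poly (a \<cdot>\<^sub>m 1\<^sub>m n) = [:-a,1:] ^ n"
proof -
  have "upper_triangular (a \<cdot>\<^sub>m 1\<^sub>m n)" unfolding upper_triangular_def by auto
  from char_poly_upper_triangular[OF _ this, of n] have "char_poly (a \<cdot>\<^sub>m 1\<^sub>m n) = (\<Prod>x\<leftarrow>diag_mat (a \<cdot>\<^sub>m 1\<^sub>m n). [:- x, 1:])" by simp
  also have "diag_mat (a \<cdot>\<^sub>m 1\<^sub>m n) = replicate n a" unfolding diag_mat_def by (auto intro: nth_equalityI)
  finally show ?thesis by (simp add: prod_list_replicate)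
qed

lemma smult_zero_vec: "v \<in> carrier_vec n \<Longrightarrow> (0::'a::field) \<cdot>\<^sub>v v = 0\<^sub>v n"
  by (rule eq_vecI) auto

lemma poly_cp_0:
  fixes A :: "'a::field mat"
  assumes A: "A \<in> carrier_mat n n"
  shows "(poly (char_poly A) 0 = 0) \<longleftrightarrow> det A = 0"
proof -
  have "(poly (char_poly A) 0 = 0) \<longleftrightarrow> eigenvalue A 0" using eigenvalue_root_char_poly[OF A] by simp
  also have "\<dots> \<longleftrightarrow> (\<exists>v. v \<in> carrier_vec n \<and> v \<noteq> 0\<^sub>v n \<and> A *\<^sub>v v = 0\<^sub>v n)"
    unfolding eigenvalue_def eigenvector_def using A smult_zero_vec by fastforce
  also have "\<dots> \<longleftrightarrow> det A = 0" using det_0_iff_vec_prod_zero[OF A] by simp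
  finally show ?thesis .
qed

lemma main_LA:
  fixes L Z :: "complex mat"
  assumes L: "L \<in> carrier_mat n n" and Z: "Z \<in> carrier_mat n n"
   and LZ: "L * Z = 0\<^sub>m n n" and ZZ: "Z * Z = Z" and tr: "mtr Z = of_nat d" and dn: "d \<le> n"
   and nd: "det (L + Z) \<noteq> 0"
  shows "(\<exists>q. char_poly L = monom 1 d * q \<and> poly q 0 \<noteq> 0 \<and> char_poly (L + \<alpha> \<cdot>\<^sub>m Z) = [:-\<alpha>,1:]^d * q)
      \<and> (\<alpha> \<noteq> 0 \<longrightarrow> det (L + \<alpha> \<cdot>\<^sub>m Z) \<noteq> 0)"
proof -
  have LZs: "\<And>i j. i < n \<Longrightarrow> j < n \<Longrightarrow> (\<Sum>k<n. L $$ (i,k) * Z $$ (k,j)) = 0"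
  proof -
    fix i j assume i: "i < n" and j: "j < n"
    have "(L * Z) $$ (i,j) = 0" using i j unfolding LZ by simp
    thus "(\<Sum>k<n. L $$ (i,k) * Z $$ (k,j)) = 0" unfolding mult_entry[OF L Z i j] .
  qed
  have ZZs: "\<And>i j. i < n \<Longrightarrow> j < n \<Longrightarrow> (\<Sum>k<n. Z $$ (i,k) * Z $$ (k,j)) = Z $$ (i,j)"
  proof -
    fix i j assume i: "i < n" and j: "j < n"
    have "(Z * Z) $$ (i,j) = Z $$ (i,j)" unfolding ZZ ..
    thus "(\<Sum>k<n. Z $$ (i,k) * Z $$ (k,j)) = Z $$ (i,j)" unfolding mult_entry[OF Z Z i j] .
  qed
  have E: "char_poly (L + a \<cdot>\<^sub>m Z) * [:0,1:]^d = char_poly L * [:-a,1:]^d" for a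
  proof -
    define A where "A = L + a \<cdot>\<^sub>m Z"
    define B where "B = a \<cdot>\<^sub>m (1\<^sub>m n - Z)"
    define D where "D = a \<cdot>\<^sub>m (1\<^sub>m n :: complex mat)"
    have cA: "A \<in> carrier_mat n n" unfolding A_def using L Z by simp
    have cB: "B \<in> carrier_mat n n" unfolding B_def using Z by (simp add: minus_carrier_mat)
    have cD: "D \<in> carrier_mat n n" unfolding D_def by simp
    have eA: "\<And>i j. i < n \<Longrightarrow> j < n \<Longrightarrow> A $$ (i,j) = L $$ (i,j) + a * Z $$ (i,j)"
      unfolding A_def using L Z by simp
    have eB: "\<And>i j. i < n \<Longrightarrow> j < n \<Longrightarrow> B $$ (i,j) = a * ((if i = j then 1 else 0) - Z $$ (i,j))"
      unfolding B_def using Z by simp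
    have eD: "\<And>i j. i < n \<Longrightarrow> j < n \<Longrightarrow> D $$ (i,j) = (if i = j then a else 0)"
      unfolding D_def by simp
    have s: "A + B = L + D"
      by (rule eq_matI) (use cA cB cD L in \<open>auto simp: eA eB eD algebra_simps\<close>)
    have p: "A * B = L * D"
    proof (rule eq_matI)
      fix i j assume "i < dim_row (L * D)" "j < dim_col (L * D)"
      hence i: "i < n" and j: "j < n" using L cD by auto
      have "(A * B) $$ (i,j) = (\<Sum>k<n. (L $$ (i,k) + a * Z $$ (i,k)) * (a * ((if k = j then 1 else 0) - Z $$ (k,j))))"
        unfolding mult_entry[OF cA cB i j] using i j by (intro sum.cong) (auto simp: eA eB)
      also have "\<dots> = (\<Sum>k<n. (if k = j then a * L $$ (i,k) + a * a * Z $$ (i,k) else 0)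
          - a * (L $$ (i,k) * Z $$ (k,j)) - a * a * (Z $$ (i,k) * Z $$ (k,j)))"
        by (intro sum.cong refl) (auto simp: algebra_simps)
      also have "\<dots> = (\<Sum>k<n. (if k = j then a * L $$ (i,k) + a * a * Z $$ (i,k) else 0))
          - a * (\<Sum>k<n. L $$ (i,k) * Z $$ (k,j)) - a * a * (\<Sum>k<n. Z $$ (i,k) * Z $$ (k,j))"
        by (simp add: sum_subtractf sum_distrib_left)
      also have "\<dots> = a * L $$ (i,j)" using i j LZs ZZs by simp
      also have "\<dots> = (L * D) $$ (i,j)" unfolding mult_entry[OF L cD i j] using i j
        by (simp add: eD if_distrib cong: if_cong)
      finally show "(A * B) $$ (i,j) = (L * D) $$ (i,j)" .
    qed (use cA cB L cD in auto)
    have BB: "B * B = a \<cdot>\<^sub>m B"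
    proof (rule eq_matI)
      fix i j assume "i < dim_row (a \<cdot>\<^sub>m B)" "j < dim_col (a \<cdot>\<^sub>m B)"
      hence i: "i < n" and j: "j < n" using cB by auto
      have "(B * B) $$ (i,j) = (\<Sum>k<n. (a * ((if i = k then 1 else 0) - Z $$ (i,k))) * (a * ((if k = j then 1 else 0) - Z $$ (k,j))))"
        unfolding mult_entry[OF cB cB i j] using i j by (intro sum.cong) (auto simp: eB)
      also have "\<dots> = (\<Sum>k<n. (if k = i then a * a * ((if i = j then 1 else 0) - Z $$ (i,j)) else 0)
          - (if k = j then a * a * Z $$ (i,k) else 0) + a * a * (Z $$ (i,k) * Z $$ (k,j)))"
        by (intro sum.cong refl) (auto simp: algebra_simps)
      also have "\<dots> = (\<Sum>k<n. (if k = i then a * a * ((if i = j then 1 else 0) - Z $$ (i,j)) else 0))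
          - (\<Sum>k<n. (if k = j then a * a * Z $$ (i,k) else 0)) + a * a * (\<Sum>k<n. Z $$ (i,k) * Z $$ (k,j))"
        by (simp add: sum_subtractf sum.distrib sum_distrib_left)
      also have "\<dots> = a * a * ((if i = j then 1 else 0) - Z $$ (i,j))" using i j ZZs by simp
      also have "\<dots> = (a \<cdot>\<^sub>m B) $$ (i,j)" using i j cB by (simp add: eB)
      finally show "(B * B) $$ (i,j) = (a \<cdot>\<^sub>m B) $$ (i,j)" .
    qed (use cB in auto)
    have trB: "mtr B = a * of_nat (n - d)"
    proof -
      have "mtr B = (\<Sum>i<n. a * (1 - Z $$ (i,i)))" unfolding mtr_def using cB eB by simp
      also have "\<dots> = a * (of_nat n - mtr Z)" unfolding mtr_def using Z
        by (simp add: sum_distrib_left sum_subtractf algebra_simps)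
      finally show ?thesis using tr dn by (simp add: of_nat_diff)
    qed
    have cpB: "char_poly B = [:-a,1:] ^ (n - d) * [:0,1:] ^ d"
      using cp_idem[OF cB BB trB] dn by simp
    have cpD: "char_poly D = [:-a,1:] ^ n" unfolding D_def by (rule cp_scalar)
    have "char_poly A * char_poly B = char_poly L * char_poly D" by (rule cp_prod_eq[OF cA cB L cD s p])
    hence "(char_poly A * [:0,1:] ^ d) * [:-a,1:] ^ (n - d) = (char_poly L * [:-a,1:] ^ d) * [:-a,1:] ^ (n - d)"
      unfolding cpB cpD using dn by (simp add: algebra_simps power_add[symmetric])
    moreover have "[:-a,1:] ^ (n - d) \<noteq> 0" by simp
    ultimately show ?thesis unfolding A_def by simp
  qed
  have "1 \<cdot>\<^sub>m Z = Z" by (rule eq_matI) auto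
  hence Z1: "L + 1 \<cdot>\<^sub>m Z = L + Z" by simp
  have c1: "L + Z \<in> carrier_mat n n" using L Z by simp
  have p1: "poly (char_poly (L + Z)) 0 \<noteq> 0" using poly_cp_0[OF c1] nd by simp
  have E1: "char_poly (L + Z) * [:-0,1:]^d = char_poly L * [:-1,1:]^d" using E[of 1] unfolding Z1 by simp
  have ox: "Polynomial.order 0 ([:0,1:]^d :: complex poly) = d" using order_power_n_n[of "0::complex" d] by simp
  have nz1: "char_poly (L + Z) * [:-0,1:]^d \<noteq> 0" using p1 by auto
  have o0: "Polynomial.order 0 (char_poly (L + Z) * [:-0,1:]^d) = d"
    using order_mult[OF nz1] order_0I[OF p1] ox by simp
  have nz2: "char_poly L * [:-1,1:]^d \<noteq> 0" using nz1 unfolding E1 .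
  have o1: "Polynomial.order 0 (char_poly L * [:-1,1:]^d) = d" using o0 unfolding E1 .
  have "poly ([:-1,1:]^d) 0 \<noteq> (0::complex)" by simp
  hence o2: "Polynomial.order 0 ([:-1,1:]^d :: complex poly) = 0" by (rule order_0I)
  have ordL: "Polynomial.order 0 (char_poly L) = d" using o1 order_mult[OF nz2, of 0] o2 by simp
  have cpL0: "char_poly L \<noteq> 0" using nz2 by auto
  from order_decomp[OF cpL0, of 0] obtain q where q: "char_poly L = [:-0,1:]^d * q" and nd: "\<not> [:-0,1:] dvd q"
    unfolding ordL by auto
  have q0: "poly q 0 \<noteq> 0" using nd by (simp add: poly_eq_0_iff_dvd)
  have X: "monom 1 d = [:0,1:]^(d::nat)" by (simp add: monom_altdef)
  have gen: "char_poly (L + \<alpha> \<cdot>\<^sub>m Z) = [:-\<alpha>,1:]^d * q"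
  proof -
    have "char_poly (L + \<alpha> \<cdot>\<^sub>m Z) * [:0,1:]^d = ([:-\<alpha>,1:]^d * q) * [:0,1:]^d"
      using E[of \<alpha>] q by (simp add: algebra_simps)
    moreover have "[:0,1:]^d \<noteq> (0 :: complex poly)" by simp
    ultimately show ?thesis by simp
  qed
  have "\<alpha> \<noteq> 0 \<longrightarrow> det (L + \<alpha> \<cdot>\<^sub>m Z) \<noteq> 0"
  proof
    assume a: "\<alpha> \<noteq> 0"
    have ca: "L + \<alpha> \<cdot>\<^sub>m Z \<in> carrier_mat n n" using L Z by simp
    have "poly (char_poly (L + \<alpha> \<cdot>\<^sub>m Z)) 0 \<noteq> 0" unfolding gen using a q0 by simp
    thus "det (L + \<alpha> \<cdot>\<^sub>m Z) \<noteq> 0" using poly_cp_0[OF ca] by simp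
  qed
  moreover have "char_poly L = monom 1 d * q" unfolding X using q by simp
  ultimately show ?thesis using q0 gen by blast
qed

definition noout :: "(nat \<times> nat) set \<Rightarrow> nat \<Rightarrow> bool" where
  "noout F r \<longleftrightarrow> (\<forall>j. (r,j) \<notin> F)"
definition fnl :: "(nat \<times> nat) set \<Rightarrow> bool" where
  "fnl F \<longleftrightarrow> (\<forall>i a b. (i,a) \<in> F \<longrightarrow> (i,b) \<in> F \<longrightarrow> a = b)"
definition rt :: "(nat \<times> nat) set \<Rightarrow> nat \<Rightarrow> nat \<Rightarrow> bool" where
  "rt F v j \<longleftrightarrow> (v,j) \<in> F\<^sup>* \<and> noout F j"
definition good :: "real mat \<Rightarrow> nat \<Rightarrow> (nat \<times> nat) set \<Rightarrow> bool" where
  "good W n F \<longleftrightarrow> F \<subseteq> arcs W n \<and> fnl F \<and> (\<forall>v. \<exists>r. rt F v r)"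

lemma arcs_sub: "arcs W n \<subseteq> {..<n} \<times> {..<n}"
  unfolding arcs_def by auto

lemma arcs_fin: "finite (arcs W n)"
  by (rule finite_subset[OF arcs_sub]) auto

lemma first_step:
  assumes "fnl F" "(x,r) \<in> F\<^sup>*" "(x,y) \<in> F" "noout F r"
  shows "(y,r) \<in> F\<^sup>*"
  using assms(2)
proof (cases rule: converse_rtranclE)
  case base
  then show ?thesis using assms(3,4) unfolding noout_def by auto
next
  case (step z)
  then show ?thesis using assms(1,3) unfolding fnl_def by auto
qed

lemma rt_step:
  assumes "fnl F" "(x,y) \<in> F"
  shows "rt F x r \<longleftrightarrow> rt F y r"
  using first_step[OF assms(1) _ assms(2)] assms(2) unfolding rt_def
  by (meson converse_rtrancl_into_rtrancl)

lemma rt_sym: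
  assumes "fnl F" "(x,y) \<in> (F \<union> F\<inverse>)\<^sup>*"
  shows "rt F x r \<longleftrightarrow> rt F y r"
  using assms(2)
proof (induction rule: rtrancl_induct)
  case base
  then show ?case by simp
next
  case (step y z)
  then show ?case using rt_step[OF assms(1), of y z r] rt_step[OF assms(1), of z y r] by auto
qed

lemma rt_unique:
  assumes "fnl F" "rt F v a" "rt F v b"
  shows "a = b"
proof -
  have "(v,a) \<in> F\<^sup>*" "noout F a" using assms(2) unfolding rt_def by auto
  then show ?thesis using assms(3)
  proof (induction rule: converse_rtrancl_induct)
    case base
    then have "(a,b) \<in> F\<^sup>*" unfolding rt_def by auto
    then show ?case
    proof (cases rule: converse_rtranclE)
      case base
      then show ?thesis by simp
    next
      case (step z)
      then show ?thesis using \<open>noout F a\<close> unfolding noout_def by auto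
    qed
  next
    case (step v u)
    then show ?case using rt_step[OF assms(1) step(1)] by auto
  qed
qed

lemma rt_noout:
  assumes "noout F i"
  shows "rt F i j \<longleftrightarrow> j = i"
proof
  assume "rt F i j"
  hence "(i,j) \<in> F\<^sup>*" unfolding rt_def by auto
  thus "j = i"
  proof (cases rule: converse_rtranclE)
    case base then show ?thesis by simp
  next
    case (step z) then show ?thesis using assms unfolding noout_def by auto
  qed
next
  assume "j = i" thus "rt F i j" using assms unfolding rt_def by auto
qed

lemma sym_conv: "(x,y) \<in> (F \<union> F\<inverse>)\<^sup>* \<Longrightarrow> (y,x) \<in> (F \<union> F\<inverse>)\<^sup>*"
proof -
  assume "(x,y) \<in> (F \<union> F\<inverse>)\<^sup>*"
  hence "(y,x) \<in> ((F \<union> F\<inverse>)\<inverse>)\<^sup>*" by (rule rtrancl_converseI)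
  moreover have "(F \<union> F\<inverse>)\<inverse> = F \<union> F\<inverse>" by auto
  ultimately show ?thesis by simp
qed

lemma card_le1_fnl:
  assumes "finite F"
  shows "(\<forall>i. card {j. (i,j) \<in> F} \<le> 1) \<longleftrightarrow> fnl F"
proof -
  have fin: "finite {j. (i,j) \<in> F}" for i
    by (rule finite_subset[of _ "snd ` F"]) (use assms in force)+
  show ?thesis unfolding fnl_def using card_le_Suc0_iff_eq[OF fin] by auto
qed

lemma outdeg0:
  assumes "finite F"
  shows "outdeg F r = 0 \<longleftrightarrow> noout F r"
proof -
  have fin: "finite {j. (r,j) \<in> F}"
    by (rule finite_subset[of _ "snd ` F"]) (use assms in force)+
  show ?thesis unfolding outdeg_def noout_def using fin by auto
qed

lemma forest_good:
  assumes F: "is_in_forest W n F"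
  shows "good W n F"
proof -
  have sub: "F \<subseteq> arcs W n" using F unfolding is_in_forest_def by auto
  have fin: "finite F" using finite_subset[OF sub arcs_fin] .
  have fn: "fnl F"
  proof -
    have "\<forall>i. card {j. (i,j) \<in> F} \<le> 1"
    proof
      fix i show "card {j. (i,j) \<in> F} \<le> 1"
      proof (cases "i < n")
        case True then show ?thesis using F unfolding is_in_forest_def outdeg_def by auto
      next
        case False
        hence "{j. (i,j) \<in> F} = {}" using sub arcs_sub by blast
        then show ?thesis by simp
      qed
    qed
    thus ?thesis using card_le1_fnl[OF fin] by simp
  qed
  have "\<exists>r. rt F v r" for v
  proof (cases "v < n")
    case False
    hence "noout F v" using sub arcs_sub unfolding noout_def by blast
    thus ?thesis unfolding rt_def by auto
  next
    case True
    then obtain r where r: "r \<in> weak_comp F n v" "outdeg F r = 0"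
      using F unfolding is_in_forest_def by blast
    have nr: "noout F r" using r(2) outdeg0[OF fin] by simp
    have vr: "(v,r) \<in> (F \<union> F\<inverse>)\<^sup>*" using r(1) unfolding weak_comp_def by auto
    have claim: "(r,u) \<in> (F \<union> F\<inverse>)\<^sup>* \<Longrightarrow> (u,r) \<in> F\<^sup>*" for u
    proof (induction rule: rtrancl_induct)
      case base then show ?case by simp
    next
      case (step u u')
      from step(2) show ?case
      proof
        assume "(u,u') \<in> F"
        thus ?thesis using first_step[OF fn step(3) _ nr] by simp
      next
        assume "(u,u') \<in> F\<inverse>"
        thus ?thesis using step(3) by (meson converseD converse_rtrancl_into_rtrancl)
      qed
    qed
    have "(v,r) \<in> F\<^sup>*" using claim[OF sym_conv[OF vr]] .
    thus ?thesis using nr unfolding rt_def by auto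
  qed
  thus ?thesis unfolding good_def using sub fn by auto
qed

lemma rt_lt:
  assumes "F \<subseteq> arcs W n" "(v,r) \<in> F\<^sup>*" "v < n"
  shows "r < n"
  using assms(2)
proof (cases rule: rtranclE)
  case base then show ?thesis using assms(3) by simp
next
  case (step y) then show ?thesis using assms(1) arcs_sub by blast
qed

lemma good_forest:
  assumes G: "good W n F"
  shows "is_in_forest W n F"
proof -
  have sub: "F \<subseteq> arcs W n" and fn: "fnl F" and ex: "\<And>v. \<exists>r. rt F v r" using G unfolding good_def by auto
  have fin: "finite F" using finite_subset[OF sub arcs_fin] .
  have od: "\<forall>i<n. outdeg F i \<le> 1" using card_le1_fnl[OF fin] fn unfolding outdeg_def by auto
  have "\<exists>!r. r \<in> weak_comp F n i \<and> outdeg F r = 0" if i: "i < n" for i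
  proof -
    obtain r where r: "rt F i r" using ex by blast
    have ir: "(i,r) \<in> F\<^sup>*" and nr: "noout F r" using r unfolding rt_def by auto
    have rn: "r < n" using rt_lt[OF sub ir i] .
    have "(i,r) \<in> (F \<union> F\<inverse>)\<^sup>*" using ir by (rule rtrancl_mono[THEN subsetD, rotated]) auto
    hence r1: "r \<in> weak_comp F n i" using rn unfolding weak_comp_def by auto
    have r2: "outdeg F r = 0" using nr outdeg0[OF fin] by simp
    have "r' = r" if "r' \<in> weak_comp F n i" "outdeg F r' = 0" for r'
    proof -
      have nr': "noout F r'" using that(2) outdeg0[OF fin] by simp
      have ir': "(i,r') \<in> (F \<union> F\<inverse>)\<^sup>*" using that(1) unfolding weak_comp_def by auto
      have "rt F i r'" using rt_sym[OF fn ir', of r'] nr' unfolding rt_def by auto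
      thus ?thesis using rt_unique[OF fn _ r] by simp
    qed
    thus ?thesis using r1 r2 by blast
  qed
  thus ?thesis unfolding is_in_forest_def using sub od by auto
qed

lemma forest_iff_good: "is_in_forest W n F \<longleftrightarrow> good W n F"
  using forest_good good_forest by blast

lemma rt_char:
  assumes F: "is_in_forest W n F" and v: "v < n"
  shows "(j \<in> weak_comp F n v \<and> outdeg F j = 0) \<longleftrightarrow> rt F v j"
proof -
  have G: "good W n F" using forest_good[OF F] .
  have sub: "F \<subseteq> arcs W n" and fn: "fnl F" using G unfolding good_def by auto
  have fin: "finite F" using finite_subset[OF sub arcs_fin] .
  show ?thesis
  proof
    assume a: "j \<in> weak_comp F n v \<and> outdeg F j = 0"
    have nr': "noout F j" using a outdeg0[OF fin] by simp
    have vj: "(v,j) \<in> (F \<union> F\<inverse>)\<^sup>*" using a unfolding weak_comp_def by auto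
    show "rt F v j" using rt_sym[OF fn vj, of j] nr' unfolding rt_def by auto
  next
    assume r: "rt F v j"
    have ir: "(v,j) \<in> F\<^sup>*" and nr: "noout F j" using r unfolding rt_def by auto
    have rn: "j < n" using rt_lt[OF sub ir v] .
    have "(v,j) \<in> (F \<union> F\<inverse>)\<^sup>*" using ir by (rule rtrancl_mono[THEN subsetD, rotated]) auto
    thus "j \<in> weak_comp F n v \<and> outdeg F j = 0" using rn nr outdeg0[OF fin] unfolding weak_comp_def by auto
  qed
qed

lemma forest_count:
  assumes F: "is_in_forest W n F"
  shows "card F + num_trees F n = n" and "card {r. r < n \<and> noout F r} = num_trees F n"
proof -
  have G: "good W n F" using forest_good[OF F] .
  have sub: "F \<subseteq> arcs W n" and fn: "fnl F" and ex: "\<And>v. \<exists>r. rt F v r" using G unfolding good_def by auto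
  have fin: "finite F" using finite_subset[OF sub arcs_fin] .
  define R where "R = {r. r < n \<and> noout F r}"
  define N where "N = {r. r < n \<and> \<not> noout F r}"
  have "fst ` F = N" unfolding N_def noout_def using sub arcs_sub by force
  moreover have "inj_on fst F" using fn unfolding fnl_def inj_on_def by auto
  ultimately have cN: "card F = card N" using card_image by metis
  have "N \<union> R = {..<n}" "N \<inter> R = {}" unfolding N_def R_def by auto
  hence cNR: "card N + card R = n" using card_Un_disjoint[of N R] unfolding N_def R_def by (metis card_lessThan finite_Un finite_lessThan)
  have wc: "weak_comp F n v = weak_comp F n r" if "(v,r) \<in> (F \<union> F\<inverse>)\<^sup>*" for v r
  proof -
    have "(r,v) \<in> (F \<union> F\<inverse>)\<^sup>*" using sym_conv[OF that] .
    thus ?thesis using that unfolding weak_comp_def by (auto intro: rtrancl_trans)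
  qed
  have img: "weak_comp F n ` {..<n} = weak_comp F n ` R"
  proof
    show "weak_comp F n ` R \<subseteq> weak_comp F n ` {..<n}" unfolding R_def by auto
    show "weak_comp F n ` {..<n} \<subseteq> weak_comp F n ` R"
    proof
      fix C assume "C \<in> weak_comp F n ` {..<n}"
      then obtain v where v: "v < n" "C = weak_comp F n v" by auto
      obtain r where r: "rt F v r" using ex by blast
      have vr: "(v,r) \<in> F\<^sup>*" and nr: "noout F r" using r unfolding rt_def by auto
      have rn: "r < n" using rt_lt[OF sub vr v(1)] .
      have "(v,r) \<in> (F \<union> F\<inverse>)\<^sup>*" using vr by (rule rtrancl_mono[THEN subsetD, rotated]) auto
      hence "C = weak_comp F n r" using wc v by simp
      thus "C \<in> weak_comp F n ` R" using rn nr unfolding R_def by auto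
    qed
  qed
  have inj: "inj_on (weak_comp F n) R"
  proof
    fix r1 r2 assume r1: "r1 \<in> R" and r2: "r2 \<in> R" and eq: "weak_comp F n r1 = weak_comp F n r2"
    have "r1 \<in> weak_comp F n r1" using r1 unfolding R_def weak_comp_def by auto
    hence "r1 \<in> weak_comp F n r2" using eq by simp
    hence "(r2,r1) \<in> (F \<union> F\<inverse>)\<^sup>*" unfolding weak_comp_def by auto
    moreover have "rt F r1 r1" using r1 unfolding R_def rt_def by auto
    ultimately have "rt F r2 r1" using rt_sym[OF fn] by blast
    thus "r1 = r2" using rt_noout[of F r2 r1] r2 unfolding R_def by auto
  qed
  have "num_trees F n = card R" unfolding num_trees_def img using card_image[OF inj] .
  thus "card F + num_trees F n = n" "card {r. r < n \<and> noout F r} = num_trees F n"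
    using cN cNR unfolding R_def by auto
qed

lemma good_insert:
  assumes H: "good W n H" and ni: "noout H i" and a: "(i,l) \<in> arcs W n" and li: "(l,i) \<notin> H\<^sup>*"
  shows "good W n (insert (i,l) H)"
    and "\<And>v j. rt (insert (i,l) H) v j \<longleftrightarrow> (if (v,i) \<in> H\<^sup>* then rt H l j else rt H v j)"
proof -
  let ?G = "insert (i,l) H"
  have sub: "H \<subseteq> arcs W n" and fn: "fnl H" and ex: "\<And>v. \<exists>r. rt H v r" using H unfolding good_def by auto
  have fnG: "fnl ?G" using fn ni unfolding fnl_def noout_def by auto
  have mono: "(x,y) \<in> H\<^sup>* \<Longrightarrow> (x,y) \<in> ?G\<^sup>*" for x y by (rule rtrancl_mono[THEN subsetD, rotated]) auto
  have nG: "noout ?G j" if "noout H j" "j \<noteq> i" for j using that unfolding noout_def by auto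
  have back1: "rt ?G v j" if "(v,i) \<in> H\<^sup>*" "rt H l j" for v j
  proof -
    have lj: "(l,j) \<in> H\<^sup>*" and nj: "noout H j" using that(2) unfolding rt_def by auto
    have "j \<noteq> i" using lj li by auto
    hence "noout ?G j" using nG nj by simp
    moreover have "(v,j) \<in> ?G\<^sup>*"
    proof -
      have "(v,i) \<in> ?G\<^sup>*" using mono[OF that(1)] .
      moreover have "(i,l) \<in> ?G" by simp
      ultimately have "(v,l) \<in> ?G\<^sup>*" by (rule rtrancl_into_rtrancl)
      thus ?thesis using mono[OF lj] by (rule rtrancl_trans)
    qed
    ultimately show ?thesis unfolding rt_def by simp
  qed
  have back2: "rt ?G v j" if "(v,i) \<notin> H\<^sup>*" "rt H v j" for v j
  proof -
    have vj: "(v,j) \<in> H\<^sup>*" and nj: "noout H j" using that(2) unfolding rt_def by auto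
    have "j \<noteq> i" using vj that(1) by auto
    thus ?thesis using nG nj mono[OF vj] unfolding rt_def by simp
  qed
  have exG: "\<exists>r. (if (v,i) \<in> H\<^sup>* then rt H l r else rt H v r) \<and> rt ?G v r" for v
  proof (cases "(v,i) \<in> H\<^sup>*")
    case True
    obtain r where "rt H l r" using ex by blast
    then show ?thesis using True back1 by auto
  next
    case False
    obtain r where "rt H v r" using ex by blast
    then show ?thesis using False back2 by auto
  qed
  show "good W n ?G" unfolding good_def using sub a fnG exG by blast
  show "rt ?G v j \<longleftrightarrow> (if (v,i) \<in> H\<^sup>* then rt H l j else rt H v j)" for v j
  proof
    assume r: "rt ?G v j"
    obtain r' where r': "(if (v,i) \<in> H\<^sup>* then rt H l r' else rt H v r')" "rt ?G v r'" using exG by blast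
    have "j = r'" using rt_unique[OF fnG r r'(2)] .
    thus "(if (v,i) \<in> H\<^sup>* then rt H l j else rt H v j)" using r'(1) by simp
  next
    assume "(if (v,i) \<in> H\<^sup>* then rt H l j else rt H v j)"
    thus "rt ?G v j" using back1 back2 by (auto split: if_splits)
  qed
qed

lemma no_cycle:
  assumes fn: "fnl F" and aa: "(a,a) \<in> F\<^sup>+" and ar: "(a,r) \<in> F\<^sup>*" and nr: "noout F r"
  shows False
proof -
  have "(u,a) \<in> F\<^sup>+" if "(a,u) \<in> F\<^sup>*" for u
    using that
  proof (induction rule: rtrancl_induct)
    case base then show ?case using aa .
  next
    case (step u u')
    from tranclD[OF step(3)] obtain s where s: "(u,s) \<in> F" "(s,a) \<in> F\<^sup>*" by auto
    have "s = u'" using fn s(1) step(2) unfolding fnl_def by auto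
    hence "(u',a) \<in> F\<^sup>*" using s by simp
    then show ?case using aa by (metis rtranclD)
  qed
  from this[OF ar] have "(r,a) \<in> F\<^sup>+" .
  from tranclD[OF this] show False using nr unfolding noout_def by auto
qed

lemma good_remove:
  assumes G: "good W n G" and il: "(i,l) \<in> G"
  shows "good W n (G - {(i,l)})" "noout (G - {(i,l)}) i" "(l,i) \<notin> (G - {(i,l)})\<^sup>*"
    "(i,l) \<in> arcs W n" "insert (i,l) (G - {(i,l)}) = G" "(i,l) \<notin> G - {(i,l)}"
proof -
  let ?H = "G - {(i,l)}"
  have sub: "G \<subseteq> arcs W n" and fn: "fnl G" and ex: "\<And>v. \<exists>r. rt G v r" using G unfolding good_def by auto
  have fnH: "fnl ?H" using fn unfolding fnl_def by auto
  show ni: "noout ?H i" using fn il unfolding noout_def fnl_def by auto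
  have exH: "\<exists>r. rt ?H v r" for v
  proof -
    obtain r0 where "rt G v r0" using ex by blast
    hence vr: "(v,r0) \<in> G\<^sup>*" and nr: "noout G r0" unfolding rt_def by auto
    from vr show ?thesis
    proof (induction rule: converse_rtrancl_induct)
      case base
      have "noout ?H r0" using nr unfolding noout_def by auto
      then show ?case unfolding rt_def by auto
    next
      case (step v u)
      show ?case
      proof (cases "(v,u) = (i,l)")
        case True
        then show ?thesis using ni unfolding rt_def by auto
      next
        case False
        hence "(v,u) \<in> ?H" using step(1) by simp
        then show ?thesis using step(3) rt_step[OF fnH] by blast
      qed
    qed
  qed
  show "good W n ?H" unfolding good_def using sub fnH exH by auto
  show "(l,i) \<notin> ?H\<^sup>*"
  proof
    assume "(l,i) \<in> ?H\<^sup>*"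
    hence "(l,i) \<in> G\<^sup>*" by (rule rtrancl_mono[THEN subsetD, rotated]) auto
    hence "(i,i) \<in> G\<^sup>+" using il by (meson rtrancl_into_trancl2)
    moreover obtain r where "rt G i r" using ex by blast
    ultimately show False using no_cycle[OF fn] unfolding rt_def by blast
  qed
  show "(i,l) \<in> arcs W n" using sub il by auto
  show "insert (i,l) ?H = G" using il by auto
  show "(i,l) \<notin> ?H" by simp
qed

definition Fk :: "real mat \<Rightarrow> nat \<Rightarrow> nat \<Rightarrow> (nat \<times> nat) set set" where
  "Fk W n k = {F. is_in_forest W n F \<and> card F = k}"

definition Eset :: "real mat \<Rightarrow> nat \<Rightarrow> (nat \<times> nat) set \<Rightarrow> nat \<Rightarrow> nat set" where
  "Eset W n H i = {l. (i,l) \<in> arcs W n \<and> (l,i) \<notin> H\<^sup>*}"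

lemma Fk_fin: "finite (Fk W n k)"
proof -
  have "Fk W n k \<subseteq> Pow (arcs W n)" unfolding Fk_def is_in_forest_def by auto
  thus ?thesis using arcs_fin by (metis finite_Pow_iff finite_subset)
qed

lemma Eset_fin: "finite (Eset W n H i)"
proof -
  have "Eset W n H i \<subseteq> snd ` arcs W n" unfolding Eset_def by force
  thus ?thesis using arcs_fin by (metis finite_imageI finite_subset)
qed

lemma decomp:
  "(\<Sum>G\<in>{G\<in>Fk W n (Suc k). \<not> noout G i}. f G) =
   (\<Sum>H\<in>{H\<in>Fk W n k. noout H i}. \<Sum>l\<in>Eset W n H i. f (insert (i,l) H))"
proof -
  define S where "S = Sigma {H\<in>Fk W n k. noout H i} (\<lambda>H. Eset W n H i)"
  define T where "T = {G\<in>Fk W n (Suc k). \<not> noout G i}"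
  define h where "h = (\<lambda>(H,l::nat). insert (i,l) H)"
  have finA: "finite {H\<in>Fk W n k. noout H i}" using Fk_fin by simp
  have "(\<Sum>H\<in>{H\<in>Fk W n k. noout H i}. \<Sum>l\<in>Eset W n H i. f (insert (i,l) H)) = (\<Sum>(H,l)\<in>S. f (insert (i,l) H))"
    unfolding S_def by (rule sum.Sigma[OF finA]) (simp add: Eset_fin)
  also have "\<dots> = (\<Sum>x\<in>S. f (h x))" unfolding h_def by (simp add: case_prod_beta)
  also have "\<dots> = sum f T"
  proof (rule sum.reindex_bij_betw)
    show "bij_betw h S T" unfolding bij_betw_def
    proof
      show "inj_on h S"
      proof (rule inj_onI)
        fix x y assume x: "x \<in> S" and y: "y \<in> S" and e: "h x = h y"
        obtain H l where xx: "x = (H,l)" by (cases x)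
        obtain H' l' where yy: "y = (H',l')" by (cases y)
        have nH: "noout H i" "noout H' i" using x y unfolding xx yy S_def by auto
        have e': "insert (i,l) H = insert (i,l') H'" using e unfolding xx yy h_def by simp
        have "(i,l) \<in> insert (i,l') H'" unfolding e'[symmetric] by simp
        hence ll: "l = l'" using nH(2) unfolding noout_def by auto
        have "(i,l) \<notin> H" "(i,l) \<notin> H'" using nH unfolding noout_def by auto
        hence "H = H'" using e' unfolding ll by (metis Diff_insert_absorb)
        thus "x = y" unfolding xx yy ll by simp
      qed
      show "h ` S = T"
      proof
        show "h ` S \<subseteq> T"
        proof
          fix G assume "G \<in> h ` S"
          then obtain H l where Hl: "(H,l) \<in> S" "G = insert (i,l) H" unfolding h_def by auto
          have HF: "is_in_forest W n H" "card H = k" "noout H i" and lE: "l \<in> Eset W n H i"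
            using Hl(1) unfolding S_def Fk_def by auto
          have gH: "good W n H" using forest_good[OF HF(1)] .
          have a: "(i,l) \<in> arcs W n" "(l,i) \<notin> H\<^sup>*" using lE unfolding Eset_def by auto
          have "good W n G" unfolding Hl(2) by (rule good_insert(1)[OF gH HF(3) a])
          hence "is_in_forest W n G" by (rule good_forest)
          moreover have "finite H" using gH arcs_fin unfolding good_def by (metis finite_subset)
          hence "card G = Suc k" unfolding Hl(2) using HF(2,3) unfolding noout_def by auto
          moreover have "\<not> noout G i" unfolding Hl(2) noout_def by auto
          ultimately show "G \<in> T" unfolding T_def Fk_def by auto
        qed
        show "T \<subseteq> h ` S"
        proof
          fix G assume "G \<in> T"
          hence GF: "is_in_forest W n G" "card G = Suc k" "\<not> noout G i" unfolding T_def Fk_def by auto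
          then obtain l where il: "(i,l) \<in> G" unfolding noout_def by auto
          have gG: "good W n G" using forest_good[OF GF(1)] .
          note R = good_remove[OF gG il]
          have fin: "finite G" using gG arcs_fin unfolding good_def by (metis finite_subset)
          have "card (G - {(i,l)}) = k" using GF(2) il fin by simp
          hence "(G - {(i,l)}, l) \<in> S" unfolding S_def Fk_def Eset_def using R good_forest by auto
          moreover have "G = h (G - {(i,l)}, l)" unfolding h_def using R(5) by simp
          ultimately show "G \<in> h ` S" by blast
        qed
      qed
    qed
  qed
  finally show ?thesis unfolding T_def by simp
qed

definition qq :: "real mat \<Rightarrow> nat \<Rightarrow> nat \<Rightarrow> nat \<Rightarrow> nat \<Rightarrow> real" where
  "qq W n k i j = (\<Sum>F\<in>Fk W n k. fweight W F * of_bool (rt F i j))"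

lemma qmat_entry:
  assumes "i < n" "j < n"
  shows "Qmat W n k $$ (i,j) = qq W n k i j"
proof -
  have se: "{F. is_in_forest W n F \<and> card F = k \<and> j \<in> weak_comp F n i \<and> outdeg F j = 0} = {F\<in>Fk W n k. rt F i j}"
    using rt_char[OF _ assms(1)] unfolding Fk_def by blast
  have "Qmat W n k $$ (i,j) = (\<Sum>F\<in>{F. is_in_forest W n F \<and> card F = k \<and> j \<in> weak_comp F n i \<and> outdeg F j = 0}. fweight W F)"
    unfolding Qmat_def using assms by simp
  also have "\<dots> = (\<Sum>F\<in>{F\<in>Fk W n k. rt F i j}. fweight W F)" unfolding se ..
  also have "\<dots> = (\<Sum>F\<in>Fk W n k \<inter> {F. rt F i j}. fweight W F)" by (rule arg_cong[where f="sum (fweight W)"]) blast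
  also have "\<dots> = (\<Sum>F\<in>Fk W n k. if F \<in> {F. rt F i j} then fweight W F else 0)"
    by (rule sum.inter_restrict[OF Fk_fin])
  also have "\<dots> = qq W n k i j" unfolding qq_def by (intro sum.cong refl) auto
  finally show ?thesis .
qed

lemma sigma_Fk: "sigma W n k = (\<Sum>F\<in>Fk W n k. fweight W F)"
  unfolding sigma_def Fk_def ..

lemma Fk_good: "F \<in> Fk W n k \<Longrightarrow> good W n F \<and> finite F \<and> card F = k"
proof -
  assume "F \<in> Fk W n k"
  hence F: "is_in_forest W n F" "card F = k" unfolding Fk_def by auto
  have g: "good W n F" using forest_good[OF F(1)] .
  hence "F \<subseteq> arcs W n" unfolding good_def by auto
  hence "finite F" using arcs_fin by (rule finite_subset)
  thus ?thesis using g F by auto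
qed

lemma fweight_insert:
  assumes "finite H" "(i,l) \<notin> H"
  shows "fweight W (insert (i,l) H) = W $$ (i,l) * fweight W H"
  unfolding fweight_def using assms by simp

lemma antisym_sum:
  fixes a f :: "nat \<Rightarrow> real"
  shows "(\<Sum>p\<in>T. \<Sum>l\<in>T. a p * a l * (f p - f l)) = 0"
proof -
  have "(\<Sum>p\<in>T. \<Sum>l\<in>T. a p * a l * (f p - f l)) = (\<Sum>p\<in>T. (\<Sum>l\<in>T. a p * a l * f p) - (\<Sum>l\<in>T. a p * a l * f l))"
    by (simp add: sum_subtractf[symmetric] right_diff_distrib)
  also have "\<dots> = (\<Sum>p\<in>T. \<Sum>l\<in>T. a p * a l * f p) - (\<Sum>p\<in>T. \<Sum>l\<in>T. a p * a l * f l)"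
    by (rule sum_subtractf)
  also have "(\<Sum>p\<in>T. \<Sum>l\<in>T. a p * a l * f l) = (\<Sum>l\<in>T. \<Sum>p\<in>T. a p * a l * f l)" by (rule sum.swap)
  also have "\<dots> = (\<Sum>p\<in>T. \<Sum>l\<in>T. a p * a l * f p)" by (intro sum.cong refl) (simp add: ac_simps)
  finally show ?thesis by simp
qed

lemma lap_row:
  assumes i: "i < n"
  shows "(\<Sum>l<n. laplacian W n $$ (i,l) * x l) = (\<Sum>l\<in>{..<n} - {i}. W $$ (i,l) * (x i - x l))"
proof -
  let ?N = "{..<n} - {i}"
  have "(\<Sum>l<n. laplacian W n $$ (i,l) * x l) = laplacian W n $$ (i,i) * x i + (\<Sum>l\<in>?N. laplacian W n $$ (i,l) * x l)"
    using i by (subst sum.remove[of _ i]) auto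
  also have "laplacian W n $$ (i,i) = (\<Sum>l\<in>?N. W $$ (i,l))" unfolding laplacian_def using i by simp
  also have "(\<Sum>l\<in>?N. laplacian W n $$ (i,l) * x l) = (\<Sum>l\<in>?N. - (W $$ (i,l) * x l))"
  proof (rule sum.cong[OF refl])
    fix l assume "l \<in> ?N"
    hence "l < n" "l \<noteq> i" by auto
    thus "laplacian W n $$ (i,l) * x l = - (W $$ (i,l) * x l)" unfolding laplacian_def using i by simp
  qed
  also have "(\<Sum>l\<in>?N. W $$ (i,l)) * x i + (\<Sum>l\<in>?N. - (W $$ (i,l) * x l)) = (\<Sum>l\<in>?N. W $$ (i,l) * x i) - (\<Sum>l\<in>?N. W $$ (i,l) * x l)"
    by (simp add: sum_distrib_right sum_negf)
  also have "\<dots> = (\<Sum>l\<in>?N. W $$ (i,l) * (x i - x l))"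
    by (simp add: sum_subtractf[symmetric] right_diff_distrib)
  finally show ?thesis .
qed

lemma recurrence:
  assumes nn: "\<forall>i<n. \<forall>j<n. W $$ (i,j) \<ge> 0" and i: "i < n" and j: "j < n"
  shows "(\<Sum>l<n. laplacian W n $$ (i,l) * qq W n k l j) = of_bool (i = j) * sigma W n (Suc k) - qq W n (Suc k) i j"
proof -
  define w where "w l = W $$ (i,l)" for l
  define N where "N = {..<n} - {i}"
  define \<phi> where "\<phi> F = (\<Sum>l\<in>N. w l * (of_bool (rt F i j) - of_bool (rt F l j)))" for F
  define A where "A k' = {F\<in>Fk W n k'. noout F i}" for k'
  define B where "B k' = {F\<in>Fk W n k'. \<not> noout F i}" for k'
  have finN: "finite N" unfolding N_def by simp
  have w0: "w l = 0" if "l \<in> N" "(i,l) \<notin> arcs W n" for l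
    using that nn i unfolding w_def N_def arcs_def by force
  have EN: "Eset W n H i \<subseteq> N" for H unfolding Eset_def N_def arcs_def by auto
  have split: "(\<Sum>F\<in>Fk W n k'. g F) = (\<Sum>F\<in>A k'. g F) + (\<Sum>F\<in>B k'. g F)" for k' and g :: "(nat \<times> nat) set \<Rightarrow> real"
  proof -
    have "Fk W n k' = A k' \<union> B k'" "A k' \<inter> B k' = {}" unfolding A_def B_def by auto
    moreover have "finite (A k')" "finite (B k')" unfolding A_def B_def using Fk_fin by auto
    ultimately show ?thesis by (metis sum.union_disjoint)
  qed
  have S1: "(\<Sum>l<n. laplacian W n $$ (i,l) * qq W n k l j) = (\<Sum>l\<in>N. w l * (qq W n k i j - qq W n k l j))"
    unfolding N_def w_def by (rule lap_row[OF i])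
  have S2: "(\<Sum>l\<in>N. w l * (qq W n k i j - qq W n k l j)) = (\<Sum>F\<in>Fk W n k. fweight W F * \<phi> F)"
  proof -
    have d: "qq W n k i j - qq W n k l j = (\<Sum>F\<in>Fk W n k. fweight W F * (of_bool (rt F i j) - of_bool (rt F l j)))" for l
      unfolding qq_def by (simp add: sum_subtractf[symmetric] right_diff_distrib)
    have "(\<Sum>l\<in>N. w l * (qq W n k i j - qq W n k l j))
        = (\<Sum>l\<in>N. \<Sum>F\<in>Fk W n k. w l * (fweight W F * (of_bool (rt F i j) - of_bool (rt F l j))))"
      unfolding d by (simp add: sum_distrib_left)
    also have "\<dots> = (\<Sum>F\<in>Fk W n k. \<Sum>l\<in>N. w l * (fweight W F * (of_bool (rt F i j) - of_bool (rt F l j))))"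
      by (rule sum.swap)
    also have "\<dots> = (\<Sum>F\<in>Fk W n k. fweight W F * \<phi> F)"
      unfolding \<phi>_def sum_distrib_left by (intro sum.cong refl) (simp add: mult.left_commute)
    finally show ?thesis .
  qed
  have PA: "\<phi> F = (\<Sum>l\<in>Eset W n F i. w l * (of_bool (i = j) - of_bool (rt F l j)))" if F: "F \<in> A k" for F
  proof -
    have nF: "noout F i" and gF: "good W n F" using F Fk_good unfolding A_def by auto
    have fn: "fnl F" using gF unfolding good_def by auto
    have rij: "rt F i j \<longleftrightarrow> i = j" using rt_noout[OF nF] by auto
    have "\<phi> F = (\<Sum>l\<in>N. if l \<in> Eset W n F i then w l * (of_bool (i = j) - of_bool (rt F l j)) else 0)"
      unfolding \<phi>_def
    proof (intro sum.cong refl)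
      fix l assume l: "l \<in> N"
      show "w l * (of_bool (rt F i j) - of_bool (rt F l j)) = (if l \<in> Eset W n F i then w l * (of_bool (i = j) - of_bool (rt F l j)) else 0)"
      proof (cases "(l,i) \<in> F\<^sup>*")
        case True
        hence rli: "rt F l i" using nF unfolding rt_def by auto
        have e: "rt F l j \<longleftrightarrow> i = j"
        proof
          assume "rt F l j" thus "i = j" by (rule rt_unique[OF fn rli])
        next
          assume "i = j" thus "rt F l j" using rli by simp
        qed
        have "l \<notin> Eset W n F i" using True unfolding Eset_def by simp
        thus ?thesis using e rij by simp
      next
        case False
        show ?thesis
        proof (cases "(i,l) \<in> arcs W n")
          case True
          hence "l \<in> Eset W n F i" using False unfolding Eset_def by simp
          thus ?thesis using rij by simp
        next
          case nA: False
          hence "l \<notin> Eset W n F i" unfolding Eset_def by simp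
          thus ?thesis using w0[OF l nA] by simp
        qed
      qed
    qed
    also have "\<dots> = (\<Sum>l\<in>N \<inter> Eset W n F i. w l * (of_bool (i = j) - of_bool (rt F l j)))"
      by (rule sum.inter_restrict[OF finN, symmetric])
    also have "N \<inter> Eset W n F i = Eset W n F i" using EN by auto
    finally show ?thesis .
  qed
  have RHS: "of_bool (i = j) * sigma W n (Suc k) - qq W n (Suc k) i j
      = (\<Sum>H\<in>A k. fweight W H * (\<Sum>l\<in>Eset W n H i. w l * (of_bool (i = j) - of_bool (rt H l j))))"
  proof -
    define g where "g G = fweight W G * (of_bool (i = j) - of_bool (rt G i j))" for G
    have "of_bool (i = j) * sigma W n (Suc k) - qq W n (Suc k) i j
        = (\<Sum>G\<in>Fk W n (Suc k). of_bool (i = j) * fweight W G - fweight W G * of_bool (rt G i j))"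
      unfolding sigma_Fk qq_def by (simp add: sum_distrib_left sum_subtractf)
    also have "\<dots> = (\<Sum>G\<in>Fk W n (Suc k). g G)"
      unfolding g_def by (intro sum.cong refl) (simp add: algebra_simps)
    also have "\<dots> = (\<Sum>G\<in>A (Suc k). g G) + (\<Sum>G\<in>B (Suc k). g G)" by (rule split)
    also have "(\<Sum>G\<in>A (Suc k). g G) = 0"
    proof (rule sum.neutral, rule ballI)
      fix G assume "G \<in> A (Suc k)"
      hence "noout G i" unfolding A_def by auto
      thus "g G = 0" unfolding g_def using rt_noout[of G i j] by auto
    qed
    also have "(\<Sum>G\<in>B (Suc k). g G) = (\<Sum>H\<in>A k. \<Sum>l\<in>Eset W n H i. g (insert (i,l) H))"
      unfolding A_def B_def by (rule decomp)
    also have "\<dots> = (\<Sum>H\<in>A k. fweight W H * (\<Sum>l\<in>Eset W n H i. w l * (of_bool (i = j) - of_bool (rt H l j))))"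
    proof (intro sum.cong refl)
      fix H assume H: "H \<in> A k"
      have nH: "noout H i" and gH: "good W n H" and fH: "finite H" using H Fk_good unfolding A_def by auto
      have "(\<Sum>l\<in>Eset W n H i. g (insert (i,l) H)) = (\<Sum>l\<in>Eset W n H i. fweight W H * (w l * (of_bool (i = j) - of_bool (rt H l j))))"
      proof (intro sum.cong refl)
        fix l assume l: "l \<in> Eset W n H i"
        have a: "(i,l) \<in> arcs W n" "(l,i) \<notin> H\<^sup>*" using l unfolding Eset_def by auto
        have "rt (insert (i,l) H) i j \<longleftrightarrow> rt H l j" using good_insert(2)[OF gH nH a, of i j] by simp
        moreover have "(i,l) \<notin> H" using nH unfolding noout_def by auto
        ultimately show "g (insert (i,l) H) = fweight W H * (w l * (of_bool (i = j) - of_bool (rt H l j)))"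
          unfolding g_def w_def using fweight_insert[OF fH] by simp
      qed
      thus "(\<Sum>l\<in>Eset W n H i. g (insert (i,l) H)) = fweight W H * (\<Sum>l\<in>Eset W n H i. w l * (of_bool (i = j) - of_bool (rt H l j)))"
        by (simp add: sum_distrib_left)
    qed
    finally show ?thesis by simp
  qed
  have PB: "(\<Sum>F\<in>B k. fweight W F * \<phi> F) = 0"
  proof (cases k)
    case 0
    have "B k = {}"
    proof -
      have "F = {}" if "F \<in> Fk W n 0" for F using Fk_good[OF that] by auto
      thus ?thesis unfolding B_def 0 noout_def by auto
    qed
    thus ?thesis by simp
  next
    case (Suc k')
    have "(\<Sum>F\<in>B k. fweight W F * \<phi> F) = (\<Sum>K\<in>A k'. \<Sum>p\<in>Eset W n K i. fweight W (insert (i,p) K) * \<phi> (insert (i,p) K))"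
      unfolding A_def B_def Suc by (rule decomp)
    also have "\<dots> = 0"
    proof (rule sum.neutral, rule ballI)
      fix K assume K: "K \<in> A k'"
      have nK: "noout K i" and gK: "good W n K" and fK: "finite K" using K Fk_good unfolding A_def by auto
      define T where "T = {l\<in>N. (l,i) \<notin> K\<^sup>*}"
      define f where "f l = (of_bool (rt K l j) :: real)" for l
      have finT: "finite T" unfolding T_def using finN by simp
      have ET: "Eset W n K i \<subseteq> T" unfolding T_def using EN unfolding Eset_def by auto
      have phiG: "\<phi> (insert (i,p) K) = (\<Sum>l\<in>T. w l * (f p - f l))" if p: "p \<in> Eset W n K i" for p
      proof -
        have a: "(i,p) \<in> arcs W n" "(p,i) \<notin> K\<^sup>*" using p unfolding Eset_def by auto
        note ch = good_insert(2)[OF gK nK a]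
        have "\<phi> (insert (i,p) K) = (\<Sum>l\<in>N. if l \<in> T then w l * (f p - f l) else 0)"
          unfolding \<phi>_def
        proof (intro sum.cong refl)
          fix l assume l: "l \<in> N"
          show "w l * (of_bool (rt (insert (i, p) K) i j) - of_bool (rt (insert (i, p) K) l j)) =
                (if l \<in> T then w l * (f p - f l) else 0)"
            using ch[of i j] ch[of l j] l unfolding T_def f_def by auto
        qed
        also have "\<dots> = (\<Sum>l\<in>N \<inter> T. w l * (f p - f l))" by (rule sum.inter_restrict[OF finN, symmetric])
        also have "N \<inter> T = T" unfolding T_def by auto
        finally show ?thesis .
      qed
      have "(\<Sum>p\<in>Eset W n K i. fweight W (insert (i,p) K) * \<phi> (insert (i,p) K))
          = (\<Sum>p\<in>Eset W n K i. fweight W K * (w p * (\<Sum>l\<in>T. w l * (f p - f l))))"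
      proof (intro sum.cong refl)
        fix p assume p: "p \<in> Eset W n K i"
        have "(i,p) \<notin> K" using nK unfolding noout_def by auto
        thus "fweight W (insert (i,p) K) * \<phi> (insert (i,p) K) = fweight W K * (w p * (\<Sum>l\<in>T. w l * (f p - f l)))"
          using phiG[OF p] fweight_insert[OF fK] unfolding w_def by simp
      qed
      also have "\<dots> = fweight W K * (\<Sum>p\<in>Eset W n K i. w p * (\<Sum>l\<in>T. w l * (f p - f l)))"
        by (simp add: sum_distrib_left)
      also have "(\<Sum>p\<in>Eset W n K i. w p * (\<Sum>l\<in>T. w l * (f p - f l))) = (\<Sum>p\<in>T. w p * (\<Sum>l\<in>T. w l * (f p - f l)))"
      proof (rule sum.mono_neutral_left[OF finT ET], rule ballI)
        fix p assume p: "p \<in> T - Eset W n K i"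
        hence "p \<in> N" "(i,p) \<notin> arcs W n" unfolding T_def Eset_def by auto
        thus "w p * (\<Sum>l\<in>T. w l * (f p - f l)) = 0" using w0 by simp
      qed
      also have "\<dots> = (\<Sum>p\<in>T. \<Sum>l\<in>T. w p * w l * (f p - f l))" by (simp add: sum_distrib_left mult.assoc)
      also have "\<dots> = 0" by (rule antisym_sum)
      finally show "(\<Sum>p\<in>Eset W n K i. fweight W (insert (i,p) K) * \<phi> (insert (i,p) K)) = 0" by simp
    qed
    finally show ?thesis .
  qed
  have "(\<Sum>l<n. laplacian W n $$ (i,l) * qq W n k l j) = (\<Sum>F\<in>A k. fweight W F * \<phi> F) + (\<Sum>F\<in>B k. fweight W F * \<phi> F)"
    using S1 S2 split by simp
  also have "(\<Sum>F\<in>A k. fweight W F * \<phi> F) = (\<Sum>H\<in>A k. fweight W H * (\<Sum>l\<in>Eset W n H i. w l * (of_bool (i = j) - of_bool (rt H l j))))"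
    using PA by simp
  finally show ?thesis using PB RHS by simp
qed

lemma lap_carrier: "laplacian W n \<in> carrier_mat n n" unfolding laplacian_def by simp
lemma Q_carrier: "Qmat W n k \<in> carrier_mat n n" unfolding Qmat_def by simp

lemma mv_zero: "(A :: 'a::field mat) \<in> carrier_mat n n \<Longrightarrow> A *\<^sub>v 0\<^sub>v n = 0\<^sub>v n"
  by (rule eq_vecI) auto

lemma mv_smult: "(A :: 'a::field mat) \<in> carrier_mat n n \<Longrightarrow> v \<in> carrier_vec n \<Longrightarrow> (k \<cdot>\<^sub>m A) *\<^sub>v v = k \<cdot>\<^sub>v (A *\<^sub>v v)"
  by (rule eq_vecI) (auto simp: scalar_prod_def sum_distrib_left mult.assoc)

lemma empty_forest: "is_in_forest W n {}"
  by (rule good_forest) (auto simp: good_def fnl_def rt_def noout_def)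

lemma rec_mat:
  assumes nn: "\<forall>i<n. \<forall>j<n. W $$ (i,j) \<ge> 0"
  shows "Qmat W n (Suc k) = sigma W n (Suc k) \<cdot>\<^sub>m 1\<^sub>m n - laplacian W n * Qmat W n k"
proof (rule eq_matI)
  fix i j assume "i < dim_row (sigma W n (Suc k) \<cdot>\<^sub>m 1\<^sub>m n - laplacian W n * Qmat W n k)"
    "j < dim_col (sigma W n (Suc k) \<cdot>\<^sub>m 1\<^sub>m n - laplacian W n * Qmat W n k)"
  hence i: "i < n" and j: "j < n" using Q_carrier[of W n k] lap_carrier[of W n] by auto
  have "(laplacian W n * Qmat W n k) $$ (i,j) = (\<Sum>l<n. laplacian W n $$ (i,l) * qq W n k l j)"
    unfolding mult_entry[OF lap_carrier Q_carrier i j] using j by (intro sum.cong refl) (simp add: qmat_entry)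
  also have "\<dots> = of_bool (i = j) * sigma W n (Suc k) - qq W n (Suc k) i j" by (rule recurrence[OF nn i j])
  finally show "Qmat W n (Suc k) $$ (i,j) = (sigma W n (Suc k) \<cdot>\<^sub>m 1\<^sub>m n - laplacian W n * Qmat W n k) $$ (i,j)"
    using i j Q_carrier[of W n k] lap_carrier[of W n] by (simp add: qmat_entry)
qed (use Q_carrier[of W n k] Q_carrier[of W n "Suc k"] lap_carrier[of W n] in auto)

lemma Fk0: "Fk W n 0 = {{}}"
proof -
  have "F = {}" if "F \<in> Fk W n 0" for F using Fk_good[OF that] by auto
  moreover have "{} \<in> Fk W n 0" unfolding Fk_def using empty_forest by auto
  ultimately show ?thesis by auto
qed

lemma Q0: "Qmat W n 0 = 1\<^sub>m n"
proof (rule eq_matI)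
  fix i j assume "i < dim_row (1\<^sub>m n)" "j < dim_col (1\<^sub>m n)"
  hence i: "i < n" and j: "j < n" by auto
  have "rt {} i j \<longleftrightarrow> j = i" by (rule rt_noout) (simp add: noout_def)
  thus "Qmat W n 0 $$ (i,j) = 1\<^sub>m n $$ (i,j)" using i j
    by (simp add: qmat_entry qq_def Fk0 fweight_def)
qed (use Q_carrier[of W n] in auto)

lemma sigma0: "sigma W n 0 = 1"
  unfolding sigma_Fk Fk0 fweight_def by simp

lemma commute:
  assumes nn: "\<forall>i<n. \<forall>j<n. W $$ (i,j) \<ge> 0"
  shows "laplacian W n * Qmat W n k = Qmat W n k * laplacian W n"
proof (induction k)
  case 0
  show ?case unfolding Q0 using lap_carrier[of W n] by simp
next
  case (Suc k)
  let ?L = "laplacian W n" and ?Q = "Qmat W n k" and ?s = "sigma W n (Suc k)"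
  have cL: "?L \<in> carrier_mat n n" and cQ: "?Q \<in> carrier_mat n n" by (rule lap_carrier, rule Q_carrier)
  have cLQ: "?L * ?Q \<in> carrier_mat n n" using cL cQ by simp
  have c1: "?s \<cdot>\<^sub>m 1\<^sub>m n \<in> carrier_mat n n" by simp
  have "?L * Qmat W n (Suc k) = ?L * (?s \<cdot>\<^sub>m 1\<^sub>m n) - ?L * (?L * ?Q)"
    unfolding rec_mat[OF nn] by (rule mult_minus_distrib_mat[OF cL c1 cLQ])
  also have "?L * (?s \<cdot>\<^sub>m 1\<^sub>m n) = ?s \<cdot>\<^sub>m ?L" using mult_smult_distrib[OF cL one_carrier_mat] cL by simp
  also have "?L * (?L * ?Q) = ?L * (?Q * ?L)" unfolding Suc ..
  also have "\<dots> = (?L * ?Q) * ?L" using assoc_mult_mat[OF cL cQ cL] by simp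
  also have "?s \<cdot>\<^sub>m ?L - (?L * ?Q) * ?L = (?s \<cdot>\<^sub>m 1\<^sub>m n) * ?L - (?L * ?Q) * ?L"
    using mult_smult_assoc_mat[OF one_carrier_mat cL] cL by simp
  also have "\<dots> = (?s \<cdot>\<^sub>m 1\<^sub>m n - ?L * ?Q) * ?L" by (rule minus_mult_distrib_mat[OF c1 cLQ cL, symmetric])
  also have "\<dots> = Qmat W n (Suc k) * ?L" unfolding rec_mat[OF nn] ..
  finally show ?case .
qed

lemma fweight_pos:
  assumes "is_in_forest W n F"
  shows "fweight W F > 0"
proof -
  have sub: "F \<subseteq> arcs W n" using assms unfolding is_in_forest_def by auto
  show ?thesis unfolding fweight_def using sub unfolding arcs_def by (intro prod_pos) auto
qed

theorem proposition10:
  fixes W :: "real mat" and n :: nat and \<alpha> :: complex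
  assumes "n > 1"
    and "W \<in> carrier_mat n n"
    and "\<forall>i<n. \<forall>j<n. W $$ (i,j) \<ge> 0"
    and "\<forall>i<n. W $$ (i,i) = 0"
  shows "(\<exists>q. char_poly (cmat (laplacian W n)) = monom 1 (in_forest_dim W n) * q
            \<and> poly q 0 \<noteq> 0
            \<and> char_poly (cmat (laplacian W n) + \<alpha> \<cdot>\<^sub>m cmat (Jtilde W n))
                = [:-\<alpha>, 1:] ^ (in_forest_dim W n) * q)
      \<and> (\<alpha> \<noteq> 0 \<longrightarrow> det (cmat (laplacian W n) + \<alpha> \<cdot>\<^sub>m cmat (Jtilde W n)) \<noteq> 0)"
proof -
  note nn = assms(3)
  define d where "d = in_forest_dim W n"
  define m where "m = n - d"
  define L where "L = laplacian W n"
  define Q where "Q = Qmat W n m"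
  define \<sigma> where "\<sigma> = sigma W n m"
  define Z where "Z = Jtilde W n"
  have cL: "L \<in> carrier_mat n n" unfolding L_def by (rule lap_carrier)
  have cQ: "Q \<in> carrier_mat n n" unfolding Q_def by (rule Q_carrier)
  define S where "S = {num_trees F n | F. is_in_forest W n F}"
  have finF: "finite {F. is_in_forest W n F}"
  proof -
    have "{F. is_in_forest W n F} \<subseteq> Pow (arcs W n)" unfolding is_in_forest_def by auto
    thus ?thesis using arcs_fin by (metis finite_Pow_iff finite_subset)
  qed
  have SI: "S = (\<lambda>F. num_trees F n) ` {F. is_in_forest W n F}" unfolding S_def by auto
  have finS: "finite S" unfolding SI using finF by simp
  have neS: "S \<noteq> {}" unfolding S_def using empty_forest by auto
  have dS: "d = Min S" unfolding d_def in_forest_dim_def S_def ..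
  have "d \<in> S" unfolding dS using finS neS by (rule Min_in)
  then obtain F0 where F0: "is_in_forest W n F0" "num_trees F0 n = d" unfolding S_def by auto
  have cF0: "card F0 + d = n" using forest_count(1)[OF F0(1)] F0(2) by simp
  hence dn: "d \<le> n" and cF0m: "card F0 = m" unfolding m_def by auto
  have allle: "card F \<le> m" if "is_in_forest W n F" for F
  proof -
    have "num_trees F n \<in> S" unfolding S_def using that by auto
    hence "d \<le> num_trees F n" unfolding dS by (rule Min_le[OF finS])
    thus ?thesis using forest_count(1)[OF that] unfolding m_def by simp
  qed
  have FkS: "Fk W n (Suc m) = {}" unfolding Fk_def using allle by fastforce
  have sS: "sigma W n (Suc m) = 0" unfolding sigma_Fk FkS by simp
  have QS: "Qmat W n (Suc m) = 0\<^sub>m n n"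
    by (rule eq_matI) (use Q_carrier[of W n "Suc m"] in \<open>auto simp: qmat_entry qq_def FkS\<close>)
  have F0m: "F0 \<in> Fk W n m" unfolding Fk_def using F0(1) cF0m by auto
  have spos: "\<sigma> > 0" unfolding \<sigma>_def sigma_Fk
    by (rule sum_pos2[OF Fk_fin F0m]) (use fweight_pos F0(1) in \<open>auto simp: Fk_def intro: less_imp_le\<close>)
  hence sne: "\<sigma> \<noteq> 0" by simp
  have LQ: "L * Q = 0\<^sub>m n n"
  proof (rule eq_matI)
    fix i j assume "i < dim_row (0\<^sub>m n n :: real mat)" "j < dim_col (0\<^sub>m n n :: real mat)"
    hence i: "i < n" and j: "j < n" by auto
    have "Qmat W n (Suc m) $$ (i,j) = (sigma W n (Suc m) \<cdot>\<^sub>m 1\<^sub>m n - L * Q) $$ (i,j)"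
      unfolding L_def Q_def rec_mat[OF nn] ..
    thus "(L * Q) $$ (i,j) = 0\<^sub>m n n $$ (i,j)" using i j cL cQ unfolding QS sS by simp
  qed (use cL cQ in auto)
  have QL: "Q * L = 0\<^sub>m n n" using LQ commute[OF nn, of m] unfolding L_def Q_def by simp
  define M where "M = (if m = 0 then 0\<^sub>m n n else Qmat W n (m - 1))"
  have cM: "M \<in> carrier_mat n n" unfolding M_def using Q_carrier by auto
  have MLc: "M * L = L * M"
    unfolding M_def L_def using commute[OF nn] lap_carrier[of W n] by auto
  have IQ: "\<sigma> \<cdot>\<^sub>m 1\<^sub>m n - Q = L * M"
  proof (cases m)
    case 0
    have "\<sigma> \<cdot>\<^sub>m 1\<^sub>m n - Q = 0\<^sub>m n n" unfolding \<sigma>_def Q_def 0 sigma0 Q0 by (rule eq_matI) auto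
    also have "\<dots> = L * M" unfolding M_def using 0 right_mult_zero_mat[OF cL] by simp
    finally show ?thesis .
  next
    case (Suc m')
    have M': "M = Qmat W n m'" unfolding M_def Suc by simp
    have QQ: "Q = \<sigma> \<cdot>\<^sub>m 1\<^sub>m n - L * M" unfolding Q_def \<sigma>_def Suc M' L_def by (rule rec_mat[OF nn])
    have cLM: "L * M \<in> carrier_mat n n" using cL cM by simp
    show ?thesis unfolding QQ by (rule eq_matI) (use cLM in auto)
  qed
  have Zd: "Z = (1 / \<sigma>) \<cdot>\<^sub>m Q" unfolding Z_def Jtilde_def Let_def Q_def \<sigma>_def m_def d_def ..
  have cZ: "Z \<in> carrier_mat n n" unfolding Zd using cQ by simp
  have QZ: "Q = \<sigma> \<cdot>\<^sub>m Z" unfolding Zd by (rule eq_matI) (use cQ sne in auto)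
  have LZ: "L * Z = 0\<^sub>m n n" unfolding Zd mult_smult_distrib[OF cL cQ] LQ by simp
  have ZL: "Z * L = 0\<^sub>m n n" unfolding Zd mult_smult_assoc_mat[OF cQ cL] QL by simp
  have ZZ: "Z * Z = Z"
  proof -
    have c1: "\<sigma> \<cdot>\<^sub>m 1\<^sub>m n \<in> carrier_mat n n" by simp
    have "Z * (\<sigma> \<cdot>\<^sub>m 1\<^sub>m n - Q) = Z * (L * M)" unfolding IQ ..
    also have "\<dots> = (Z * L) * M" using assoc_mult_mat[OF cZ cL cM] by simp
    also have "\<dots> = 0\<^sub>m n n" unfolding ZL using left_mult_zero_mat[OF cM] .
    finally have e0: "Z * (\<sigma> \<cdot>\<^sub>m 1\<^sub>m n - Q) = 0\<^sub>m n n" .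
    have "Z * (\<sigma> \<cdot>\<^sub>m 1\<^sub>m n - Q) = Z * (\<sigma> \<cdot>\<^sub>m 1\<^sub>m n) - Z * Q" by (rule mult_minus_distrib_mat[OF cZ c1 cQ])
    also have "Z * (\<sigma> \<cdot>\<^sub>m 1\<^sub>m n) = \<sigma> \<cdot>\<^sub>m Z" using mult_smult_distrib[OF cZ one_carrier_mat] cZ by simp
    also have "Z * Q = \<sigma> \<cdot>\<^sub>m (Z * Z)" unfolding QZ by (rule mult_smult_distrib[OF cZ cZ])
    finally have e1: "\<sigma> \<cdot>\<^sub>m Z - \<sigma> \<cdot>\<^sub>m (Z * Z) = 0\<^sub>m n n" using e0 by simp
    show ?thesis
    proof (rule eq_matI)
      fix i j assume "i < dim_row Z" "j < dim_col Z"
      hence i: "i < n" and j: "j < n" using cZ by auto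
      have "(\<sigma> \<cdot>\<^sub>m Z - \<sigma> \<cdot>\<^sub>m (Z * Z)) $$ (i,j) = 0" unfolding e1 using i j by simp
      hence "\<sigma> * Z $$ (i,j) - \<sigma> * (Z * Z) $$ (i,j) = 0" using i j cZ by simp
      hence "\<sigma> * (Z $$ (i,j) - (Z * Z) $$ (i,j)) = 0" by (simp add: right_diff_distrib)
      thus "(Z * Z) $$ (i,j) = Z $$ (i,j)" using sne by simp
    qed (use cZ in auto)
  qed
  have trQ: "mtr Q = of_nat d * \<sigma>"
  proof -
    have "mtr Q = (\<Sum>i<n. qq W n m i i)" unfolding mtr_def using cQ by (simp add: Q_def qmat_entry)
    also have "\<dots> = (\<Sum>F\<in>Fk W n m. \<Sum>i<n. fweight W F * of_bool (noout F i))"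
      unfolding qq_def rt_def by (subst sum.swap) simp
    also have "\<dots> = (\<Sum>F\<in>Fk W n m. fweight W F * of_nat d)"
    proof (intro sum.cong refl)
      fix F assume F: "F \<in> Fk W n m"
      hence Ff: "is_in_forest W n F" "card F = m" unfolding Fk_def by auto
      have "card ({..<n} \<inter> {i. noout F i}) = card {r. r < n \<and> noout F r}" by (rule arg_cong[where f=card]) auto
      also have "\<dots> = num_trees F n" by (rule forest_count(2)[OF Ff(1)])
      also have "\<dots> = d" using forest_count(1)[OF Ff(1)] Ff(2) dn unfolding m_def by simp
      finally have "card ({..<n} \<inter> {i. noout F i}) = d" .
      thus "(\<Sum>i<n. fweight W F * of_bool (noout F i)) = fweight W F * of_nat d"
        by (simp add: sum_distrib_left[symmetric])
    qed
    also have "\<dots> = (\<Sum>F\<in>Fk W n m. of_nat d * fweight W F)" by (simp add: mult.commute)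
    also have "\<dots> = of_nat d * \<sigma>" unfolding \<sigma>_def sigma_Fk by (rule sum_distrib_left[symmetric])
    finally show ?thesis .
  qed
  have trZ: "mtr Z = of_nat d"
  proof -
    have "mtr Z = (1 / \<sigma>) * mtr Q" unfolding mtr_def Zd using cQ by (simp add: sum_distrib_left)
    thus ?thesis unfolding trQ using sne by simp
  qed
  have detR: "det (L + Z) \<noteq> 0"
  proof
    assume "det (L + Z) = 0"
    have cLZ: "L + Z \<in> carrier_mat n n" using cL cZ by simp
    from \<open>det (L + Z) = 0\<close> obtain v where v: "v \<in> carrier_vec n" "v \<noteq> 0\<^sub>v n" "(L + Z) *\<^sub>v v = 0\<^sub>v n"
      unfolding det_0_iff_vec_prod_zero[OF cLZ] by blast
    have "Z * (L + Z) = Z * L + Z * Z" by (rule mult_add_distrib_mat[OF cZ cL cZ])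
    also have "\<dots> = Z" unfolding ZL ZZ using cZ by simp
    finally have ZLZ: "Z * (L + Z) = Z" .
    have Zv: "Z *\<^sub>v v = 0\<^sub>v n"
    proof -
      have "Z *\<^sub>v v = (Z * (L + Z)) *\<^sub>v v" unfolding ZLZ ..
      also have "\<dots> = Z *\<^sub>v ((L + Z) *\<^sub>v v)" by (rule assoc_mult_mat_vec[OF cZ cLZ v(1)])
      also have "\<dots> = 0\<^sub>v n" unfolding v(3) by (rule mv_zero[OF cZ])
      finally show ?thesis .
    qed
    have Lv: "L *\<^sub>v v = 0\<^sub>v n"
    proof -
      have "(L + Z) *\<^sub>v v = L *\<^sub>v v + Z *\<^sub>v v" by (rule add_mult_distrib_mat_vec[OF cL cZ v(1)])
      thus ?thesis unfolding v(3) Zv using cL v(1) by simp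
    qed
    have "(\<sigma> \<cdot>\<^sub>m 1\<^sub>m n - Q) *\<^sub>v v = 0\<^sub>v n"
    proof -
      have "(\<sigma> \<cdot>\<^sub>m 1\<^sub>m n - Q) *\<^sub>v v = (M * L) *\<^sub>v v" unfolding IQ MLc ..
      also have "\<dots> = M *\<^sub>v (L *\<^sub>v v)" by (rule assoc_mult_mat_vec[OF cM cL v(1)])
      also have "\<dots> = 0\<^sub>v n" unfolding Lv by (rule mv_zero[OF cM])
      finally show ?thesis .
    qed
    moreover have "(\<sigma> \<cdot>\<^sub>m 1\<^sub>m n - Q) *\<^sub>v v = \<sigma> \<cdot>\<^sub>v v"
    proof -
      have "(\<sigma> \<cdot>\<^sub>m 1\<^sub>m n - Q) *\<^sub>v v = (\<sigma> \<cdot>\<^sub>m 1\<^sub>m n) *\<^sub>v v - Q *\<^sub>v v"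
        by (rule minus_mult_distrib_mat_vec[OF _ cQ v(1)]) simp
      also have "(\<sigma> \<cdot>\<^sub>m 1\<^sub>m n) *\<^sub>v v = \<sigma> \<cdot>\<^sub>v v" using mv_smult[OF one_carrier_mat v(1)] v(1) by simp
      also have "Q *\<^sub>v v = 0\<^sub>v n" unfolding QZ mv_smult[OF cZ v(1)] Zv by (rule eq_vecI) auto
      finally show ?thesis using v(1) by simp
    qed
    ultimately have "\<sigma> \<cdot>\<^sub>v v = 0\<^sub>v n" by simp
    hence "v = 0\<^sub>v n" using sne v(1) by (auto simp: vec_eq_iff)
    thus False using v(2) by simp
  qed
  have ccL: "cmat L \<in> carrier_mat n n" and ccZ: "cmat Z \<in> carrier_mat n n" using cL cZ by auto
  have c1: "cmat L * cmat Z = 0\<^sub>m n n"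
    unfolding of_real_hom.mat_hom_mult[OF cL cZ, symmetric] LZ by (rule eq_matI) auto
  have c2: "cmat Z * cmat Z = cmat Z"
    unfolding of_real_hom.mat_hom_mult[OF cZ cZ, symmetric] ZZ ..
  have c3: "mtr (cmat Z) = of_nat d"
  proof -
    have "mtr (cmat Z) = complex_of_real (mtr Z)" unfolding mtr_def using cZ by simp
    thus ?thesis unfolding trZ by simp
  qed
  have c4: "det (cmat L + cmat Z) \<noteq> 0"
  proof -
    have "cmat L + cmat Z = cmat (L + Z)" by (rule eq_matI) (use cL cZ in auto)
    thus ?thesis using detR by simp
  qed
  from main_LA[OF ccL ccZ c1 c2 c3 dn c4, of \<alpha>]
  show ?thesis unfolding L_def Z_def d_def .
qed

end
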